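(* Let $f$ be a complex-valued harmonic function in a bounded open set $R\subset\mathbb{C}$. Suppose that $P=\operatorname{int}(\overline{R})\setminus R$ is empty or consists of finitely many poles of $f$, and suppose that $f$ has a $C^1$ extension to some open set $R_1\supset\overline{R}\setminus P$. Then $f(S)\cup f(\partial R\setminus P)$ has empty interior.
   Context: Writing $f=u+iv$, $J_f=u_xv_y-u_yv_x$ and $S=\{z\in R: J_f(z)=0\}$. A point $\alpha$ is a pole of $f$ if $f$ is harmonic in $\{z:0<|z-\alpha|<r\}$ for some $r>0$ and $\lim_{z\to\alpha}|f(z)|=\infty$. $f(\partial R\setminus P)$ denotes the image under the extension. *)

theory Defs
  imports "HOL-Analysis.Analysis"
begin

definition dx :: "(complex \<Rightarrow> complex) \<Rightarrow> complex \<Rightarrow> complex" where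
  "dx f z = vector_derivative (\<lambda>t::real. f (z + of_real t)) (at 0)"

definition dy :: "(complex \<Rightarrow> complex) \<Rightarrow> complex \<Rightarrow> complex" where
  "dy f z = vector_derivative (\<lambda>t::real. f (z + \<i> * of_real t)) (at 0)"

definition C1_on :: "complex set \<Rightarrow> (complex \<Rightarrow> complex) \<Rightarrow> bool" where
  "C1_on U f \<longleftrightarrow> f differentiable_on U \<and> continuous_on U (dx f) \<and> continuous_on U (dy f)"

definition C2_on :: "complex set \<Rightarrow> (complex \<Rightarrow> complex) \<Rightarrow> bool" where
  "C2_on U f \<longleftrightarrow> C1_on U f \<and> C1_on U (dx f) \<and> C1_on U (dy f)"

definition harmonic_on :: "complex set \<Rightarrow> (complex \<Rightarrow> complex) \<Rightarrow> bool" where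
  "harmonic_on U f \<longleftrightarrow> open U \<and> C2_on U f \<and> (\<forall>z\<in>U. dx (dx f) z + dy (dy f) z = 0)"

definition jacobian :: "(complex \<Rightarrow> complex) \<Rightarrow> complex \<Rightarrow> real" where
  "jacobian f z = Re (dx f z) * Im (dy f z) - Re (dy f z) * Im (dx f z)"

definition harmonic_pole :: "(complex \<Rightarrow> complex) \<Rightarrow> complex \<Rightarrow> bool" where
  "harmonic_pole f \<alpha> \<longleftrightarrow>
     (\<exists>r>0. harmonic_on (ball \<alpha> r - {\<alpha>}) f) \<and> filterlim (\<lambda>z. norm (f z)) at_top (at \<alpha>)"

end

theory Submission
  imports Defs "HOL-Analysis.Analysis"
begin

lemma dxdy_rep:
  assumes "(g has_derivative D) (at z)"
  shows "dx g z = D 1" "dy g z = D \<i>"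
proof -
  have lin: "linear D" using assms has_derivative_linear by blast
  have "((\<lambda>t::real. z + of_real t) has_derivative (\<lambda>t. of_real t)) (at 0)"
    by (auto intro!: derivative_eq_intros)
  from has_derivative_compose[OF this, of g D] assms
  have "((\<lambda>t::real. g (z + of_real t)) has_derivative (\<lambda>t. D (of_real t))) (at 0)" by simp
  moreover have "(\<lambda>t::real. D (of_real t)) = (\<lambda>t. t *\<^sub>R D 1)"
  proof (rule ext)
    fix t :: real show "D (of_real t) = t *\<^sub>R D 1"
      using linear_scale[OF lin, of t 1] by (simp add: scaleR_conv_of_real)
  qed
  ultimately have "((\<lambda>t::real. g (z + of_real t)) has_vector_derivative D 1) (at 0)"
    unfolding has_vector_derivative_def by simp
  then show "dx g z = D 1" unfolding dx_def by (rule vector_derivative_at)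
  have "((\<lambda>t::real. z + \<i> * of_real t) has_derivative (\<lambda>t. \<i> * of_real t)) (at 0)"
    by (auto intro!: derivative_eq_intros)
  from has_derivative_compose[OF this, of g D] assms
  have "((\<lambda>t::real. g (z + \<i> * of_real t)) has_derivative (\<lambda>t. D (\<i> * of_real t))) (at 0)" by simp
  moreover have "(\<lambda>t::real. D (\<i> * of_real t)) = (\<lambda>t. t *\<^sub>R D \<i>)"
  proof (rule ext)
    fix t :: real show "D (\<i> * of_real t) = t *\<^sub>R D \<i>"
      using linear_scale[OF lin, of t \<i>] by (simp add: scaleR_conv_of_real mult.commute)
  qed
  ultimately have "((\<lambda>t::real. g (z + \<i> * of_real t)) has_vector_derivative D \<i>) (at 0)"
    unfolding has_vector_derivative_def by simp
  then show "dy g z = D \<i>" unfolding dy_def by (rule vector_derivative_at)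
qed

lemma lin_rep:
  assumes "linear (D::complex \<Rightarrow> complex)"
  shows "D v = of_real (Re v) * D 1 + of_real (Im v) * D \<i>"
proof -
  have "v = Re v *\<^sub>R 1 + Im v *\<^sub>R \<i>" by (simp add: complex_eq_iff)
  then have "D v = D (Re v *\<^sub>R 1 + Im v *\<^sub>R \<i>)" by simp
  also have "\<dots> = Re v *\<^sub>R D 1 + Im v *\<^sub>R D \<i>"
    using assms by (simp add: linear_add linear_scale)
  finally show ?thesis by (simp add: scaleR_conv_of_real)
qed

definition Dg :: "(complex \<Rightarrow> complex) \<Rightarrow> complex \<Rightarrow> complex \<Rightarrow> complex" where
  "Dg g x v = of_real (Re v) * dx g x + of_real (Im v) * dy g x"

lemma C1_deriv:
  assumes "open S" "C1_on S g" "x \<in> S"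
  shows "(g has_derivative Dg g x) (at x)"
proof -
  have "g differentiable (at x)"
    using assms differentiable_on_eq_differentiable_at unfolding C1_on_def by blast
  then obtain D where D: "(g has_derivative D) (at x)" unfolding differentiable_def by blast
  have "D = Dg g x"
  proof (rule ext)
    fix v show "D v = Dg g x v"
      using lin_rep[OF has_derivative_linear[OF D], of v] dxdy_rep[OF D] by (simp add: Dg_def)
  qed
  with D show ?thesis by simp
qed

lemma loc_inj:
  assumes "open S" "C1_on S g" "a \<in> S" "jacobian g a \<noteq> 0"
  obtains r where "r > 0" "ball a r \<subseteq> S" "inj_on g (ball a r)"
proof -
  define A where "A = dx g a"
  define B where "B = dy g a"
  define J where "J = jacobian g a"
  have J: "J = Re A * Im B - Re B * Im A" "J \<noteq> 0"
    using assms(4) by (simp_all add: J_def A_def B_def jacobian_def)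
  define h where "h w = Complex ((Re w * Im B - Im w * Re B)/J) ((Im w * Re A - Re w * Im A)/J)" for w
  have "linear h"
    by (rule linearI) (use J(2) in \<open>simp_all add: h_def complex_eq_iff field_simps\<close>)
  then have bl: "bounded_linear h" by (simp add: linear_conv_bounded_linear)
  have inv: "h \<circ> Dg g a = id"
  proof (rule ext)
    fix v
    show "(h \<circ> Dg g a) v = id v"
      using J by (simp add: h_def Dg_def complex_eq_iff field_simps A_def[symmetric] B_def[symmetric])
         (auto simp: J(1) algebra_simps)
  qed
  have ca: "isCont (dx g) a" "isCont (dy g) a"
    using assms continuous_on_eq_continuous_at unfolding C1_on_def by blast+
  have cont: "\<exists>d>0. \<forall>x. dist a x < d \<longrightarrow> onorm (\<lambda>v. Dg g x v - Dg g a v) < e" if e: "e > 0" for e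
  proof -
    obtain d1 where d1: "d1 > 0" "\<And>y. dist y a < d1 \<Longrightarrow> dist (dx g y) (dx g a) < e/3"
      using ca(1) e unfolding continuous_at_eps_delta by (meson divide_pos_pos zero_less_numeral)
    obtain d2 where d2: "d2 > 0" "\<And>y. dist y a < d2 \<Longrightarrow> dist (dy g y) (dy g a) < e/3"
      using ca(2) e unfolding continuous_at_eps_delta by (meson divide_pos_pos zero_less_numeral)
    show ?thesis
    proof (intro exI[of _ "min d1 d2"] conjI allI impI)
      show "min d1 d2 > 0" using d1 d2 by simp
      fix x assume "dist a x < min d1 d2"
      then have "dist x a < d1" "dist x a < d2" by (simp_all add: dist_commute)
      then have n1: "norm (dx g x - dx g a) < e/3" and n2: "norm (dy g x - dy g a) < e/3"
        using d1(2)[of x] d2(2)[of x] by (simp_all add: dist_norm)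
      have "onorm (\<lambda>v. Dg g x v - Dg g a v) \<le> norm (dx g x - dx g a) + norm (dy g x - dy g a)"
      proof (rule onorm_le)
        fix v
        have "Dg g x v - Dg g a v = of_real (Re v) * (dx g x - dx g a) + of_real (Im v) * (dy g x - dy g a)"
          by (simp add: Dg_def algebra_simps)
        then have "norm (Dg g x v - Dg g a v) \<le> \<bar>Re v\<bar> * norm (dx g x - dx g a) + \<bar>Im v\<bar> * norm (dy g x - dy g a)"
          by (metis (no_types, lifting) norm_mult norm_of_real norm_triangle_ineq)
        also have "\<dots> \<le> norm v * norm (dx g x - dx g a) + norm v * norm (dy g x - dy g a)"
          by (intro add_mono mult_right_mono abs_Re_le_cmod abs_Im_le_cmod) auto
        finally show "norm (Dg g x v - Dg g a v) \<le> (norm (dx g x - dx g a) + norm (dy g x - dy g a)) * norm v"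
          by (simp add: algebra_simps)
      qed
      then show "onorm (\<lambda>v. Dg g x v - Dg g a v) < e" using n1 n2 e by linarith
    qed
  qed
  show ?thesis
    by (rule has_derivative_locally_injective[where f=g and f'="Dg g" and g'=h, OF assms(3,1) bl inv C1_deriv[OF assms(1,2)] cont])
       (use that in auto)
qed

lemma jac0_noninj:
  assumes "jacobian g x = 0"
  shows "\<exists>v. v \<noteq> 0 \<and> Dg g x v = 0"
proof -
  define a where "a = dx g x"
  define b where "b = dy g x"
  have J: "Re a * Im b = Re b * Im a" using assms by (simp add: jacobian_def a_def b_def)
  have D: "Dg g x v = of_real (Re v) * a + of_real (Im v) * b" for v by (simp add: Dg_def a_def b_def)
  show ?thesis
  proof (cases "Re a = 0 \<and> Re b = 0")
    case True
    show ?thesis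
    proof (cases "Im a = 0 \<and> Im b = 0")
      case True2: True
      with True have "a = 0" "b = 0" by (simp_all add: complex_eq_iff)
      then show ?thesis by (intro exI[of _ 1]) (simp add: D)
    next
      case False
      then show ?thesis using True J
        by (intro exI[of _ "Complex (Im b) (- Im a)"]) (auto simp: D complex_eq_iff algebra_simps)
    qed
  next
    case False
    then show ?thesis using J
      by (intro exI[of _ "Complex (Re b) (- Re a)"]) (auto simp: D complex_eq_iff algebra_simps)
  qed
qed

lemma sard_C:
  assumes "open S" "C1_on S g"
  shows "negligible (g ` {z\<in>S. jacobian g z = 0})"
proof -
  define E where "E = {z\<in>S. jacobian g z = 0}"
  have "DIM(complex) = DIM(real^2)" by simp
  then obtain \<phi> :: "complex \<Rightarrow> real^2" and \<psi> where
    iso: "linear \<phi>" "linear \<psi>" "\<And>x. norm(\<phi> x) = norm x" "\<And>y. norm(\<psi> y) = norm y"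
         "\<And>x. \<psi> (\<phi> x) = x" "\<And>y. \<phi>(\<psi> y) = y"
    by (rule isomorphisms_UNIV_UNIV) blast
  define h where "h = \<phi> \<circ> g \<circ> \<psi>"
  define L where "L y = \<phi> \<circ> Dg g (\<psi> y) \<circ> \<psi>" for y
  have "negligible (h ` (\<phi> ` E))"
  proof (rule baby_Sard)
    show "CARD(2) \<le> CARD(2)" by simp
    fix y assume y: "y \<in> \<phi> ` E"
    then obtain x where x: "x \<in> E" "y = \<phi> x" by blast
    have xS: "x \<in> S" and jx: "jacobian g x = 0" using x by (auto simp: E_def)
    have "(\<psi> has_derivative \<psi>) (at y)" by (rule linear_imp_has_derivative[OF iso(2)])
    moreover have "(g has_derivative Dg g (\<psi> y)) (at (\<psi> y))"
      using C1_deriv[OF assms xS] x iso(5) by simp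
    ultimately have "((\<lambda>y. g (\<psi> y)) has_derivative (\<lambda>v. Dg g (\<psi> y) (\<psi> v))) (at y)"
      by (rule has_derivative_compose)
    moreover have "(\<phi> has_derivative \<phi>) (at (g (\<psi> y)))" by (rule linear_imp_has_derivative[OF iso(1)])
    ultimately have "((\<lambda>y. \<phi> (g (\<psi> y))) has_derivative (\<lambda>v. \<phi> (Dg g (\<psi> y) (\<psi> v)))) (at y)"
      by (rule has_derivative_compose)
    then show "(h has_derivative L y) (at y within \<phi> ` E)"
      unfolding h_def L_def o_def by (rule has_derivative_at_withinI)
    have linL: "linear (L y)"
      using has_derivative_linear[OF \<open>(h has_derivative L y) (at y within \<phi> ` E)\<close>] .
    obtain v where v: "v \<noteq> 0" "Dg g x v = 0" using jac0_noninj[OF jx] by blast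
    have "L y (\<phi> v) = L y 0"
      using v x iso(5) linear_0[OF iso(1)] linear_0[OF linL] by (simp add: L_def)
    moreover have "\<phi> v \<noteq> 0" using iso(3)[of v] v by auto
    ultimately have "\<not> inj (L y)" unfolding inj_def by blast
    then show "rank (matrix (L y)) < CARD(2)"
      using less_rank_noninjective matrix_vector_mul(2)[OF linL] by metis
  qed
  moreover have "h ` (\<phi> ` E) = \<phi> ` (g ` E)"
    by (auto simp: h_def image_comp iso(5) image_iff)
  ultimately have n: "negligible (\<phi> ` (g ` E))" by simp
  have "negligible (\<psi> ` (\<phi> ` (g ` E)))"
    by (rule negligible_differentiable_image_negligible[OF _ n linear_imp_differentiable_on[OF iso(2)]]) simp
  moreover have "\<psi> ` (\<phi> ` (g ` E)) = g ` E" by (simp add: image_comp iso(5) o_def)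
  ultimately show ?thesis by (simp add: E_def)
qed

lemma jac_cont:
  assumes "C1_on S g" shows "continuous_on S (jacobian g)"
proof -
  have "continuous_on S (dx g)" "continuous_on S (dy g)" using assms by (auto simp: C1_on_def)
  then show ?thesis unfolding jacobian_def[abs_def] by (intro continuous_intros)
qed

lemma meagre_key:
  assumes "open R1" "C1_on R1 g" "closed F" "interior F = {}"
  shows "interior (g ` {z\<in>R1. jacobian g z = 0} \<union> g ` (F \<inter> {z\<in>R1. jacobian g z \<noteq> 0})) = {}"
proof -
  define E where "E = {z\<in>R1. jacobian g z = 0}"
  have contg: "continuous_on R1 g"
    using assms(2) differentiable_imp_continuous_on unfolding C1_on_def by blast
  have jc: "continuous_on R1 (jacobian g)" by (rule jac_cont[OF assms(2)])
  obtain C where C: "\<And>n. compact(C n)" "\<And>n. C n \<subseteq> R1" "\<And>n. C n \<subseteq> interior(C(Suc n))"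
                  "\<Union>(range C) = R1"
                  "\<And>K. \<lbrakk>compact K; K \<subseteq> R1\<rbrakk> \<Longrightarrow> \<exists>N. \<forall>n\<ge>N. K \<subseteq> (C n)"
    using open_Union_compact_subsets[OF assms(1)] by metis
  define G1 where "G1 = range (\<lambda>n. g ` (E \<inter> C n))"
  have negE: "negligible (g ` E)" unfolding E_def by (rule sard_C[OF assms(1,2)])
  have G1: "closed T \<and> interior T = {}" if "T \<in> G1" for T
  proof -
    obtain n where T: "T = g ` (E \<inter> C n)" using \<open>T \<in> G1\<close> G1_def by blast
    have eq: "E \<inter> C n = C n \<inter> {x \<in> C n. jacobian g x = 0}" using C(2) by (auto simp: E_def)
    have cl: "closed {x \<in> C n. jacobian g x = 0}"
      by (rule continuous_closed_preimage_constant)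
         (use continuous_on_subset[OF jc C(2)] compact_imp_closed[OF C(1)] in auto)
    have cE: "compact (E \<inter> C n)"
      unfolding eq by (rule compact_Int_closed[OF C(1) cl])
    have "compact T" unfolding T
      by (rule compact_continuous_image[OF continuous_on_subset[OF contg] cE]) (use C(2) in auto)
    moreover have "negligible T" unfolding T by (rule negligible_subset[OF negE]) auto
    ultimately show ?thesis
      using open_not_negligible[of "interior T"] negligible_subset[of T "interior T"]
      by (auto simp: compact_imp_closed interior_subset)
  qed
  define \<F> where "\<F> = {ball c q | c q. q > 0 \<and> ball c (2*q) \<subseteq> R1 \<and> inj_on g (ball c (2*q))}"
  obtain \<F>' where F': "\<F>' \<subseteq> \<F>" "countable \<F>'" "\<Union>\<F>' = \<Union>\<F>"
    using Lindelof[of \<F>] unfolding \<F>_def by blast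
  define G2 where "G2 = (\<lambda>W. g ` (F \<inter> closure W)) ` \<F>'"
  have G2: "closed T \<and> interior T = {}" if "T \<in> G2" for T
  proof -
    obtain W where W: "W \<in> \<F>" "T = g ` (F \<inter> closure W)" using \<open>T \<in> G2\<close> G2_def F'(1) by blast
    then obtain c q where cq: "W = ball c q" "q > 0" "ball c (2*q) \<subseteq> R1" "inj_on g (ball c (2*q))"
      unfolding \<F>_def by blast
    have Tq: "T = g ` (F \<inter> cball c q)" using W cq by simp
    have sub: "cball c q \<subseteq> ball c (2*q)" using cq(2) by (auto simp: subset_eq)
    have cF: "compact (F \<inter> cball c q)" using assms(3) by (simp add: closed_Int_compact)
    have "compact T" unfolding Tq
      by (rule compact_continuous_image[OF continuous_on_subset[OF contg] cF]) (use sub cq(3) in auto)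
    moreover have "interior T = {}"
    proof (rule ccontr)
      assume "interior T \<noteq> {}"
      then obtain w where w: "w \<in> interior T" by blast
      then obtain x where x: "x \<in> F \<inter> cball c q" "g x = w" using interior_subset Tq by blast
      define V where "V = ball c (2*q) \<inter> g -` interior T"
      have "open V" unfolding V_def
        by (rule continuous_open_preimage[OF continuous_on_subset[OF contg cq(3)]]) auto
      moreover have "x \<in> V" using x w sub by (auto simp: V_def)
      moreover have "V \<subseteq> F"
      proof
        fix y assume y: "y \<in> V"
        then have "g y \<in> T" using interior_subset by (auto simp: V_def)
        then have "g y \<in> g ` (F \<inter> cball c q)" by (simp only: Tq)
        then obtain y' where y'1: "y' \<in> F \<inter> cball c q" and y'2: "g y = g y'" by (rule imageE)
        have y': "y' \<in> F \<inter> cball c q" "g y' = g y" using y'1 y'2 by simp_all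
        have "y' = y" using inj_onD[OF cq(4) y'(2)] y' y sub by (auto simp: V_def)
        then show "y \<in> F" using y' by simp
      qed
      ultimately have "x \<in> interior F" using interior_maximal by blast
      then show False using assms(4) by simp
    qed
    ultimately show ?thesis by (simp add: compact_imp_closed)
  qed
  have cover: "g ` E \<union> g ` (F \<inter> {z\<in>R1. jacobian g z \<noteq> 0}) \<subseteq> \<Union>(G1 \<union> G2)"
  proof
    fix w assume "w \<in> g ` E \<union> g ` (F \<inter> {z\<in>R1. jacobian g z \<noteq> 0})"
    then consider x where "x \<in> E" "w = g x" | x where "x \<in> F" "x \<in> R1" "jacobian g x \<noteq> 0" "w = g x"
      by blast
    then show "w \<in> \<Union>(G1 \<union> G2)"
    proof cases
      case 1
      then obtain n where "x \<in> C n" using C(4) E_def by blast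
      then show ?thesis using 1 by (auto simp: G1_def)
    next
      case 2
      obtain r where r: "r > 0" "ball x r \<subseteq> R1" "inj_on g (ball x r)"
        using loc_inj[OF assms(1,2) 2(2,3)] by blast
      have "ball x (r/2) \<in> \<F>" unfolding \<F>_def using r by (intro CollectI exI[of _ x] exI[of _ "r/2"]) auto
      moreover have "x \<in> ball x (r/2)" using r(1) by simp
      ultimately have "x \<in> \<Union>\<F>" by blast
      then have "x \<in> \<Union>\<F>'" using F'(3) by simp
      then obtain W where W: "W \<in> \<F>'" "x \<in> W" by blast
      then have "w \<in> g ` (F \<inter> closure W)" using 2 closure_subset by blast
      then show ?thesis using W by (auto simp: G2_def)
    qed
  qed
  have "countable (G1 \<union> G2)" using F'(2) by (simp add: G1_def G2_def)
  then have "euclidean interior_of \<Union>(G1 \<union> G2) = {}"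
    using G1 G2 completely_metrizable_space_euclidean
    by (intro Baire_category_alt) (auto simp: closed_closedin[symmetric])
  then have "interior (\<Union>(G1 \<union> G2)) = {}" by simp
  then show ?thesis using interior_mono[OF cover] unfolding E_def by blast
qed

theorem lemma4p15:
  fixes f g :: "complex \<Rightarrow> complex" and R R1 :: "complex set"
  assumes "open R" and "bounded R"
    and "harmonic_on R f"
    and "finite (interior (closure R) - R)"
    and "\<forall>\<alpha>\<in>interior (closure R) - R. harmonic_pole f \<alpha>"
    and "open R1" and "closure R - (interior (closure R) - R) \<subseteq> R1"
    and "C1_on R1 g" and "\<forall>z\<in>R. g z = f z"
  shows "interior (f ` {z\<in>R. jacobian f z = 0} \<union> g ` (frontier R - (interior (closure R) - R))) = {}"
proof -
  define P where "P = interior (closure R) - R"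
  have RR1: "R \<subseteq> R1" using assms(7) closure_subset by (auto simp: P_def)
  have jeq: "jacobian f z = jacobian g z" if z: "z \<in> R" for z
  proof -
    have dg: "(g has_derivative Dg g z) (at z)" using C1_deriv[OF assms(6,8)] RR1 z by blast
    have df: "(f has_derivative Dg g z) (at z)"
      by (rule has_derivative_transform_within_open[OF dg assms(1) z]) (use assms(9) in auto)
    have "dx f z = dx g z" "dy f z = dy g z"
      using dxdy_rep[OF df] by (simp_all add: Dg_def)
    then show ?thesis by (simp add: jacobian_def)
  qed
  have "f ` {z\<in>R. jacobian f z = 0} \<union> g ` (frontier R - P)
        \<subseteq> g ` {z\<in>R1. jacobian g z = 0} \<union> g ` (frontier R \<inter> {z\<in>R1. jacobian g z \<noteq> 0})"
  proof -
    have "f ` {z\<in>R. jacobian f z = 0} \<subseteq> g ` {z\<in>R1. jacobian g z = 0}"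
    proof
      fix w assume "w \<in> f ` {z\<in>R. jacobian f z = 0}"
      then obtain z where "z \<in> R" "jacobian f z = 0" "w = f z" by blast
      then show "w \<in> g ` {z\<in>R1. jacobian g z = 0}"
        using jeq RR1 assms(9) by (intro image_eqI[of _ _ z]) auto
    qed
    moreover have "frontier R - P \<subseteq> R1"
      using assms(7) by (auto simp: P_def frontier_def)
    ultimately show ?thesis by blast
  qed
  then have "interior (f ` {z\<in>R. jacobian f z = 0} \<union> g ` (frontier R - P))
        \<subseteq> interior (g ` {z\<in>R1. jacobian g z = 0} \<union> g ` (frontier R \<inter> {z\<in>R1. jacobian g z \<noteq> 0}))"
    by (rule interior_mono)
  moreover have "interior (frontier R) = {}"
  proof -
    have "interior (frontier R) \<subseteq> closure R" "interior (frontier R) \<inter> R = {}"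
      using interior_subset[of "frontier R"] assms(1) by (auto simp: frontier_def interior_open)
    then show ?thesis using open_Int_closure_eq_empty[of "interior (frontier R)" R] by auto
  qed
  ultimately show ?thesis
    using meagre_key[OF assms(6,8) frontier_closed] unfolding P_def by blast
qed

end
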